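(* The functions $\Psi$ (in the correlated setting) and $\Phi^{\ge\nu-1}$ are monotone and submodular set functions on their respective domains $V\times\{0\}$ and $\hat V$.
   Context: Triggering model: for a directed graph $G=(V,E)$ and $p:E\to[0,1]$, an outcome $X=(T_v)_{v\in V}$ is obtained by having each node $v$ independently choose a subset $T_v$ of its in-neighbours $N_v$, with $T_v=S$ with probability $\prod_{u\in S}p_{uv}\prod_{u\in N_v\setminus S}(1-p_{uv})$; $\rho_X(A)$ is the set of nodes reachable from $A\subseteq V$ via arcs $\{(u,v):u\in T_v\}$. $\mathrm{BAL}(\mu,\nu)$ for integer constants $\mu\ge\nu\ge2$: instance = directed graph $G=(V,E)$, probability functions $p_1,\dots,p_\mu:E\to[0,1]$, seed sets $\mathcal I=(I_1,\dots,I_\mu)$, budget $k\ge2$. Let $\hat V=V\times[\mu]$; $\mathcal S\subseteq\hat V$ is identified with $(S_1,\dots,S_\mu)$, $S_i=\{v:(v,i)\in\mathcal S\}$. An outcome profile $\mathcal X=(X_1,\dots,X_\mu)$ consists of outcomes $X_i$ w.r.t. $p_i$ (independent in the heterogeneous setting; in the correlated setting all $p_i$ coincide and $X_1=\dots=X_\mu=X$). Campaign $i$ reaches $v$ from seeds $A_i$ if $v\in\rho_{X_i}(A_i)$. $V^j_{\mathcal X}$ is the set of nodes reached by exactly $j$ campaigns from $\mathcal I$. $\Phi^{\ge\nu-1}(\mathcal S)$ is the expected number of nodes $v\notin\bigcup_{j<\nu-1}V^j_{\mathcal X}$ reached by none or by at least $\nu$ campaigns from $(I_i\cup S_i)_i$.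 In the correlated setting, for $\mathcal T\subseteq V\times\{0\}$ with node set $T$, $\Psi(\mathcal T)=\mathbb E\big[\big|(\rho_X(T)\cap\bigcup_{j=1}^{\nu-1}V^j_{\mathcal X})\cup\bigcup_{j=\nu}^\mu V^j_{\mathcal X}\big|\big]$. *)

theory Defs
  imports Complex_Main "HOL-Library.FuncSet"
begin

definition in_nbrs :: "('a \<times> 'a) set \<Rightarrow> 'a \<Rightarrow> 'a set" where
  "in_nbrs E v = {u. (u, v) \<in> E}"

text \<open>Outcomes of the triggering model: each node v in V chooses T v, a subset of its in-neighbours.\<close>
definition outcomes :: "'a set \<Rightarrow> ('a \<times> 'a) set \<Rightarrow> ('a \<Rightarrow> 'a set) set" where
  "outcomes V E = (\<Pi>\<^sub>E v\<in>V. Pow (in_nbrs E v))"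

definition outcome_prob :: "'a set \<Rightarrow> ('a \<times> 'a) set \<Rightarrow> ('a \<times> 'a \<Rightarrow> real) \<Rightarrow> ('a \<Rightarrow> 'a set) \<Rightarrow> real" where
  "outcome_prob V E p X =
     (\<Prod>v\<in>V. (\<Prod>u\<in>X v. p (u, v)) * (\<Prod>u\<in>in_nbrs E v - X v. 1 - p (u, v)))"

definition live_arcs :: "'a set \<Rightarrow> ('a \<Rightarrow> 'a set) \<Rightarrow> ('a \<times> 'a) set" where
  "live_arcs V X = {(u, v). v \<in> V \<and> u \<in> X v}"

definition reach :: "'a set \<Rightarrow> ('a \<Rightarrow> 'a set) \<Rightarrow> 'a set \<Rightarrow> 'a set" where
  "reach V X A = {w. \<exists>a\<in>A. (a, w) \<in> (live_arcs V X)\<^sup>*}"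

definition num_reaching :: "'a set \<Rightarrow> nat \<Rightarrow> (nat \<Rightarrow> 'a \<Rightarrow> 'a set) \<Rightarrow> (nat \<Rightarrow> 'a set) \<Rightarrow> 'a \<Rightarrow> nat" where
  "num_reaching V mu XX A v = card {i \<in> {1..mu}. v \<in> reach V (XX i) (A i)}"

definition exactly_reached :: "'a set \<Rightarrow> nat \<Rightarrow> (nat \<Rightarrow> 'a \<Rightarrow> 'a set) \<Rightarrow> (nat \<Rightarrow> 'a set) \<Rightarrow> nat \<Rightarrow> 'a set" where
  "exactly_reached V mu XX I j = {v \<in> V. num_reaching V mu XX I v = j}"

definition slice :: "('a \<times> nat) set \<Rightarrow> nat \<Rightarrow> 'a set" where
  "slice S i = {v. (v, i) \<in> S}"

definition phi_count :: "'a set \<Rightarrow> nat \<Rightarrow> nat \<Rightarrow> (nat \<Rightarrow> 'a set) \<Rightarrow> (nat \<Rightarrow> 'a \<Rightarrow> 'a set) \<Rightarrow> ('a \<times> nat) set \<Rightarrow> nat" where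
  "phi_count V mu nu I XX S =
     card {v \<in> V. v \<notin> (\<Union>j<nu - 1. exactly_reached V mu XX I j) \<and>
                 (num_reaching V mu XX (\<lambda>i. I i \<union> slice S i) v = 0 \<or>
                  nu \<le> num_reaching V mu XX (\<lambda>i. I i \<union> slice S i) v)}"

definition Phi_het :: "'a set \<Rightarrow> ('a \<times> 'a) set \<Rightarrow> nat \<Rightarrow> nat \<Rightarrow> (nat \<Rightarrow> 'a \<times> 'a \<Rightarrow> real) \<Rightarrow> (nat \<Rightarrow> 'a set) \<Rightarrow> ('a \<times> nat) set \<Rightarrow> real" where
  "Phi_het V E mu nu p I S =
     (\<Sum>XX\<in>(\<Pi>\<^sub>E i\<in>{1..mu}. outcomes V E).
        (\<Prod>i\<in>{1..mu}. outcome_prob V E (p i) (XX i)) * real (phi_count V mu nu I XX S))"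

definition Phi_corr :: "'a set \<Rightarrow> ('a \<times> 'a) set \<Rightarrow> nat \<Rightarrow> nat \<Rightarrow> ('a \<times> 'a \<Rightarrow> real) \<Rightarrow> (nat \<Rightarrow> 'a set) \<Rightarrow> ('a \<times> nat) set \<Rightarrow> real" where
  "Phi_corr V E mu nu p I S =
     (\<Sum>X\<in>outcomes V E. outcome_prob V E p X * real (phi_count V mu nu I (\<lambda>i. X) S))"

definition Psi :: "'a set \<Rightarrow> ('a \<times> 'a) set \<Rightarrow> nat \<Rightarrow> nat \<Rightarrow> ('a \<times> 'a \<Rightarrow> real) \<Rightarrow> (nat \<Rightarrow> 'a set) \<Rightarrow> ('a \<times> nat) set \<Rightarrow> real" where
  "Psi V E mu nu p I T =
     (\<Sum>X\<in>outcomes V E. outcome_prob V E p X *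
        real (card ((reach V X (fst ` T) \<inter> (\<Union>j\<in>{1..nu - 1}. exactly_reached V mu (\<lambda>i. X) I j))
                    \<union> (\<Union>j\<in>{nu..mu}. exactly_reached V mu (\<lambda>i. X) I j))))"

definition monotone_setfun :: "'b set \<Rightarrow> ('b set \<Rightarrow> real) \<Rightarrow> bool" where
  "monotone_setfun D f \<longleftrightarrow> (\<forall>A B. A \<subseteq> B \<and> B \<subseteq> D \<longrightarrow> f A \<le> f B)"

definition submodular_setfun :: "'b set \<Rightarrow> ('b set \<Rightarrow> real) \<Rightarrow> bool" where
  "submodular_setfun D f \<longleftrightarrow>
     (\<forall>A B x. A \<subseteq> B \<and> B \<subseteq> D \<and> x \<in> D - B \<longrightarrow> f (insert x B) - f B \<le> f (insert x A) - f A)"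

end

theory Submission
  imports Defs
begin

definition covf :: "'b set \<Rightarrow> ('c \<Rightarrow> 'b set) \<Rightarrow> 'c set \<Rightarrow> nat" where
  "covf C F A = card (C \<union> \<Union>(F ` A))"

lemma cov_mono:
  assumes "finite U" "C \<subseteq> U" "\<And>a. F a \<subseteq> U" "A \<subseteq> B"
  shows "covf C F A \<le> covf C F B"
  unfolding covf_def
proof (rule card_mono)
  show "finite (C \<union> \<Union> (F ` B))" using assms by (meson UN_least le_sup_iff rev_finite_subset)
  show "C \<union> \<Union> (F ` A) \<subseteq> C \<union> \<Union> (F ` B)" using assms(4) by blast
qed

lemma card_un_diff: "finite G \<Longrightarrow> finite Y \<Longrightarrow> card (G \<union> Y) = card G + card (Y - G)"
  by (metis Un_Diff_cancel card_Un_disjoint finite_Diff Diff_disjoint)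

lemma cov_sub:
  assumes "finite U" "C \<subseteq> U" "\<And>a. F a \<subseteq> U" "A \<subseteq> B"
  shows "real (covf C F (insert y B)) - real (covf C F B)
      \<le> real (covf C F (insert y A)) - real (covf C F A)"
proof -
  define GA where "GA = C \<union> \<Union>(F ` A)"
  define GB where "GB = C \<union> \<Union>(F ` B)"
  have fA: "finite GA" unfolding GA_def using assms by (meson UN_least le_sup_iff rev_finite_subset)
  have fB: "finite GB" unfolding GB_def using assms by (meson UN_least le_sup_iff rev_finite_subset)
  have fy: "finite (F y)" using assms by (meson rev_finite_subset)
  have sub: "GA \<subseteq> GB" unfolding GA_def GB_def using assms(4) by blast
  have eA: "covf C F (insert y A) = card GA + card (F y - GA)"
    unfolding covf_def GA_def[symmetric]
    using card_un_diff[OF fA fy] by (simp add: GA_def Un_commute Un_left_commute Un_assoc)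
  have eB: "covf C F (insert y B) = card GB + card (F y - GB)"
    unfolding covf_def GB_def[symmetric]
    using card_un_diff[OF fB fy] by (simp add: GB_def Un_commute Un_left_commute Un_assoc)
  have "card (F y - GB) \<le> card (F y - GA)"
    using fy sub by (intro card_mono) auto
  then show ?thesis using eA eB unfolding covf_def GA_def GB_def by simp
qed

lemma wsum:
  assumes w: "\<And>x. x \<in> \<Omega> \<Longrightarrow> 0 \<le> w x"
    and m: "\<And>x A B. x \<in> \<Omega> \<Longrightarrow> A \<subseteq> B \<Longrightarrow> B \<subseteq> D \<Longrightarrow> g x A \<le> g x B"
    and s: "\<And>x A B y. x \<in> \<Omega> \<Longrightarrow> A \<subseteq> B \<Longrightarrow> B \<subseteq> D \<Longrightarrow> y \<in> D - B \<Longrightarrow>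
       real (g x (insert y B)) - real (g x B) \<le> real (g x (insert y A)) - real (g x A)"
  shows "monotone_setfun D (\<lambda>A. \<Sum>x\<in>\<Omega>. w x * real (g x A))
       \<and> submodular_setfun D (\<lambda>A. \<Sum>x\<in>\<Omega>. w x * real (g x A))"
proof
  show "monotone_setfun D (\<lambda>A. \<Sum>x\<in>\<Omega>. w x * real (g x A))"
    unfolding monotone_setfun_def
  proof (intro allI impI)
    fix A B assume h: "A \<subseteq> B \<and> B \<subseteq> D"
    show "(\<Sum>x\<in>\<Omega>. w x * real (g x A)) \<le> (\<Sum>x\<in>\<Omega>. w x * real (g x B))"
      by (rule sum_mono, rule mult_left_mono) (use w m h in auto)
  qed
  show "submodular_setfun D (\<lambda>A. \<Sum>x\<in>\<Omega>. w x * real (g x A))"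
    unfolding submodular_setfun_def
  proof (intro allI impI)
    fix A B y assume h: "A \<subseteq> B \<and> B \<subseteq> D \<and> y \<in> D - B"
    have "(\<Sum>x\<in>\<Omega>. w x * real (g x (insert y B))) - (\<Sum>x\<in>\<Omega>. w x * real (g x B))
        = (\<Sum>x\<in>\<Omega>. w x * (real (g x (insert y B)) - real (g x B)))"
      by (simp add: sum_subtractf right_diff_distrib)
    also have "\<dots> \<le> (\<Sum>x\<in>\<Omega>. w x * (real (g x (insert y A)) - real (g x A)))"
      by (rule sum_mono, rule mult_left_mono) (use w s h in auto)
    also have "\<dots> = (\<Sum>x\<in>\<Omega>. w x * real (g x (insert y A))) - (\<Sum>x\<in>\<Omega>. w x * real (g x A))"
      by (simp add: sum_subtractf right_diff_distrib)
    finally show "(\<Sum>x\<in>\<Omega>. w x * real (g x (insert y B))) - (\<Sum>x\<in>\<Omega>. w x * real (g x B))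
        \<le> (\<Sum>x\<in>\<Omega>. w x * real (g x (insert y A))) - (\<Sum>x\<in>\<Omega>. w x * real (g x A))" .
  qed
qed

lemma reach_Un: "reach V X (A \<union> B) = reach V X A \<union> reach V X B"
  unfolding reach_def by blast

lemma reach_UN: "reach V X A = (\<Union>a\<in>A. reach V X {a})"
  unfolding reach_def by blast

lemma reach_slice: "v \<in> reach V X (slice S i) \<longleftrightarrow> (\<exists>w. (w, i) \<in> S \<and> v \<in> reach V X {w})"
  unfolding reach_def slice_def by blast

definition phiC where
  "phiC V mu nu I XX = {v\<in>V. nu \<le> num_reaching V mu XX I v}"

definition phiF where
  "phiF V mu nu I XX = (\<lambda>(w, i). {v\<in>V. num_reaching V mu XX I v = nu - 1 \<and> i \<in> {1..mu} \<and>
      v \<notin> reach V (XX i) (I i) \<and> v \<in> reach V (XX i) {w}})"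

lemma phi_count_cov:
  assumes "2 \<le> nu"
  shows "phi_count V mu nu I XX S = covf (phiC V mu nu I XX) (phiF V mu nu I XX) S"
proof -
  have "{v \<in> V. v \<notin> (\<Union>j<nu - 1. exactly_reached V mu XX I j) \<and>
                 (num_reaching V mu XX (\<lambda>i. I i \<union> slice S i) v = 0 \<or>
                  nu \<le> num_reaching V mu XX (\<lambda>i. I i \<union> slice S i) v)}
     = phiC V mu nu I XX \<union> \<Union>(phiF V mu nu I XX ` S)" (is "?L = ?R")
  proof (rule set_eqI)
    fix v
    define A where "A = {i \<in> {1..mu}. v \<in> reach V (XX i) (I i)}"
    define B where "B = {i \<in> {1..mu}. v \<in> reach V (XX i) (I i \<union> slice S i)}"
    have AB: "A \<subseteq> B" unfolding A_def B_def by (auto simp: reach_Un)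
    have fB: "finite B" unfolding B_def by auto
    have nA: "num_reaching V mu XX I v = card A" unfolding num_reaching_def A_def by simp
    have nB: "num_reaching V mu XX (\<lambda>i. I i \<union> slice S i) v = card B"
      unfolding num_reaching_def B_def by simp
    have cAB: "card A \<le> card B" using AB fB by (simp add: card_mono)
    have ex: "(\<exists>i\<in>B - A. True) \<longleftrightarrow> (\<exists>x\<in>S. v \<in> phiF V mu nu I XX x) \<or> v \<notin> V \<or> card A \<noteq> nu - 1"
      if "v \<in> V" "card A = nu - 1"
      using that unfolding phiF_def A_def B_def by (auto simp: reach_Un reach_slice num_reaching_def; fastforce)
    have bA: "card A < card B \<longleftrightarrow> (\<exists>i\<in>B - A. True)"
    proof
      assume lt: "card A < card B"
      show "\<exists>i\<in>B - A. True"
      proof (rule ccontr)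
        assume "\<not> (\<exists>i\<in>B - A. True)"
        then have "B \<subseteq> A" by blast
        then have "A = B" using AB by blast
        then show False using lt by simp
      qed
    next
      assume "\<exists>i\<in>B - A. True"
      then have "A \<subset> B" using AB by auto
      then show "card A < card B" using fB by (simp add: psubset_card_mono)
    qed
    show "v \<in> ?L \<longleftrightarrow> v \<in> ?R"
    proof (cases "v \<in> V")
      case False
      then show ?thesis unfolding phiC_def phiF_def by auto
    next
      case True
      have L: "v \<in> ?L \<longleftrightarrow> nu - 1 \<le> card A \<and> nu \<le> card B"
        using True assms cAB nA nB unfolding exactly_reached_def by auto
      have R1: "v \<in> phiC V mu nu I XX \<longleftrightarrow> nu \<le> card A" using True nA unfolding phiC_def by simp
      have R2: "(\<exists>x\<in>S. v \<in> phiF V mu nu I XX x) \<Longrightarrow> card A = nu - 1"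
        using nA unfolding phiF_def by auto
      show ?thesis
      proof (cases "card A = nu - 1")
        case True2: True
        then show ?thesis using L R1 R2 ex[OF True True2] bA assms by auto
      next
        case False
        then show ?thesis using L R1 R2 cAB by auto
      qed
    qed
  qed
  then show ?thesis unfolding phi_count_def covf_def by simp
qed


lemma outcome_prob_nonneg:
  assumes "\<forall>e\<in>E. 0 \<le> p e \<and> p e \<le> 1" "X \<in> outcomes V E"
  shows "0 \<le> outcome_prob V E p X"
  unfolding outcome_prob_def
proof (rule prod_nonneg, rule mult_nonneg_nonneg)
  fix v assume v: "v \<in> V"
  then have Xv: "X v \<subseteq> in_nbrs E v" using assms(2) unfolding outcomes_def by auto
  show "0 \<le> (\<Prod>u\<in>X v. p (u, v))"
    using Xv assms(1) by (intro prod_nonneg) (auto simp: in_nbrs_def)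
  show "0 \<le> (\<Prod>u\<in>in_nbrs E v - X v. 1 - p (u, v))"
    using assms(1) by (intro prod_nonneg) (auto simp: in_nbrs_def)
qed

lemma psi_cov:
  "card ((reach V X (fst ` T) \<inter> M) \<union> N) = covf N (\<lambda>a. reach V X {fst a} \<inter> M) T"
proof -
  have "(reach V X (fst ` T) \<inter> M) \<union> N = N \<union> \<Union>((\<lambda>a. reach V X {fst a} \<inter> M) ` T)"
    by (subst reach_UN) blast
  then show ?thesis unfolding covf_def by simp
qed

lemma reach_sub: "M \<subseteq> V \<Longrightarrow> reach V X A \<inter> M \<subseteq> V" by blast

theorem mainTheorem15:
  fixes V :: "'a set" and E :: "('a \<times> 'a) set" and mu nu :: nat
    and ph :: "nat \<Rightarrow> 'a \<times> 'a \<Rightarrow> real" and pc :: "'a \<times> 'a \<Rightarrow> real"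
    and I :: "nat \<Rightarrow> 'a set"
  assumes "finite V" and "E \<subseteq> V \<times> V"
    and "2 \<le> nu" and "nu \<le> mu"
    and "\<forall>i\<in>{1..mu}. I i \<subseteq> V"
    and "\<forall>i\<in>{1..mu}. \<forall>e\<in>E. 0 \<le> ph i e \<and> ph i e \<le> 1"
    and "\<forall>e\<in>E. 0 \<le> pc e \<and> pc e \<le> 1"
  shows "monotone_setfun (V \<times> {0}) (Psi V E mu nu pc I) \<and>
         submodular_setfun (V \<times> {0}) (Psi V E mu nu pc I) \<and>
         monotone_setfun (V \<times> {1..mu}) (Phi_het V E mu nu ph I) \<and>
         submodular_setfun (V \<times> {1..mu}) (Phi_het V E mu nu ph I) \<and>
         monotone_setfun (V \<times> {1..mu}) (Phi_corr V E mu nu pc I) \<and>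
         submodular_setfun (V \<times> {1..mu}) (Phi_corr V E mu nu pc I)"
proof -
  have CF1: "phiC V mu nu I XX \<subseteq> V" for XX unfolding phiC_def by blast
  have CF2: "phiF V mu nu I XX a \<subseteq> V" for XX a unfolding phiF_def by (cases a) auto
  define M where "M X = (\<Union>j\<in>{1..nu - 1}. exactly_reached V mu (\<lambda>i. X) I j)" for X
  define N where "N X = (\<Union>j\<in>{nu..mu}. exactly_reached V mu (\<lambda>i. X) I j)" for X
  have MV: "M X \<subseteq> V" for X unfolding M_def exactly_reached_def by blast
  have NV: "N X \<subseteq> V" for X unfolding N_def exactly_reached_def by blast
  have P1: "Psi V E mu nu pc I = (\<lambda>T. \<Sum>X\<in>outcomes V E. outcome_prob V E pc X *
       real (covf (N X) (\<lambda>a. reach V X {fst a} \<inter> M X) T))"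
    by (rule ext) (simp add: Psi_def psi_cov M_def N_def)
  have A1: "monotone_setfun (V \<times> {0}) (Psi V E mu nu pc I) \<and>
         submodular_setfun (V \<times> {0}) (Psi V E mu nu pc I)"
    unfolding P1
    by (rule wsum[where g = "\<lambda>X T. covf (N X) (\<lambda>a. reach V X {fst a} \<inter> M X) T"])
       (use outcome_prob_nonneg assms(7) in blast,
        (rule cov_mono[OF assms(1) NV reach_sub[OF MV]]; assumption),
        (rule cov_sub[OF assms(1) NV reach_sub[OF MV]]; assumption))
  have P2: "Phi_het V E mu nu ph I = (\<lambda>S. \<Sum>XX\<in>(\<Pi>\<^sub>E i\<in>{1..mu}. outcomes V E).
        (\<Prod>i\<in>{1..mu}. outcome_prob V E (ph i) (XX i)) *
        real (covf (phiC V mu nu I XX) (phiF V mu nu I XX) S))"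
    by (rule ext) (simp add: Phi_het_def phi_count_cov[OF assms(3)])
  have A2: "monotone_setfun (V \<times> {1..mu}) (Phi_het V E mu nu ph I) \<and>
         submodular_setfun (V \<times> {1..mu}) (Phi_het V E mu nu ph I)"
    unfolding P2
  proof (rule wsum[where g = "\<lambda>XX S. covf (phiC V mu nu I XX) (phiF V mu nu I XX) S"])
    fix XX assume XX: "XX \<in> (\<Pi>\<^sub>E i\<in>{1..mu}. outcomes V E)"
    show "0 \<le> (\<Prod>i\<in>{1..mu}. outcome_prob V E (ph i) (XX i))"
      using XX assms(6) by (intro prod_nonneg outcome_prob_nonneg) auto
  next
    fix XX and S B :: "('a \<times> nat) set" assume "S \<subseteq> B"
    then show "covf (phiC V mu nu I XX) (phiF V mu nu I XX) S
           \<le> covf (phiC V mu nu I XX) (phiF V mu nu I XX) B"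
      by (rule cov_mono[OF assms(1) CF1 CF2])
  next
    fix XX and S B :: "('a \<times> nat) set" and y assume "S \<subseteq> B"
    then show "real (covf (phiC V mu nu I XX) (phiF V mu nu I XX) (insert y B)) -
           real (covf (phiC V mu nu I XX) (phiF V mu nu I XX) B)
           \<le> real (covf (phiC V mu nu I XX) (phiF V mu nu I XX) (insert y S)) -
             real (covf (phiC V mu nu I XX) (phiF V mu nu I XX) S)"
      by (rule cov_sub[OF assms(1) CF1 CF2])
  qed
  have P3: "Phi_corr V E mu nu pc I = (\<lambda>S. \<Sum>X\<in>outcomes V E. outcome_prob V E pc X *
        real (covf (phiC V mu nu I (\<lambda>i. X)) (phiF V mu nu I (\<lambda>i. X)) S))"
    by (rule ext) (simp add: Phi_corr_def phi_count_cov[OF assms(3)])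
  have A3: "monotone_setfun (V \<times> {1..mu}) (Phi_corr V E mu nu pc I) \<and>
         submodular_setfun (V \<times> {1..mu}) (Phi_corr V E mu nu pc I)"
    unfolding P3
    by (rule wsum[where g = "\<lambda>X S. covf (phiC V mu nu I (\<lambda>i. X)) (phiF V mu nu I (\<lambda>i. X)) S"])
       (use outcome_prob_nonneg assms(7) in blast,
        (rule cov_mono[OF assms(1) CF1 CF2]; assumption),
        (rule cov_sub[OF assms(1) CF1 CF2]; assumption))
  show ?thesis using A1 A2 A3 by blast
qed

end
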